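(* For all integers $1\le k\le n$, $\hat E_{k,n}(-1)=\pm\binom{n-1}{k-1}$.
   Context: Place $1,\dots,n$ clockwise on a circle. Distinct $p_1,\dots,p_m$ are in clockwise cyclic order if $(p_2-p_1)\bmod n<\dots<(p_m-p_1)\bmod n$ (residues in $\{0,\dots,n-1\}$). For $\pi\in S_n$ (fixed points regarded as "counterclockwise loops"), an ordered pair $(i,j)$, $i\ne j$, is aligned if $\pi(j)\ne j$, the entries of $(i,\pi(i),\pi(j),j)$ are pairwise distinct except that possibly $i=\pi(i)$, and the distinct entries in this order are in clockwise cyclic order. An alignment is an unordered pair $\{i,j\}$ with $(i,j)$ or $(j,i)$ aligned; $\mathrm{al}(\pi)$ is their number. A weak excedence of $\pi$ is an $i$ with $\pi(i)\ge i$. $E_{k,n}(q)=\sum q^{k(n-k)-\mathrm{al}(\pi)}$ over $\pi\in S_n$ with exactly $k$ weak excedences, and $\hat E_{k,n}(q)=q^{k-n}E_{k,n}(q)$. *)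

theory Defs
  imports Complex_Main "HOL-Combinatorics.Permutations"
begin

text \<open>Points 1..n on a circle. A list of points is in clockwise cyclic order if
  the entries are distinct and the residues (p_i - p_1) mod n, i = 2..m, strictly increase.\<close>
definition cw_order :: "nat \<Rightarrow> nat list \<Rightarrow> bool" where
  "cw_order n ps \<longleftrightarrow> distinct ps \<and>
     sorted_wrt (<) (map (\<lambda>p. (int p - int (hd ps)) mod int n) (tl ps))"

definition aligned :: "nat \<Rightarrow> (nat \<Rightarrow> nat) \<Rightarrow> nat \<Rightarrow> nat \<Rightarrow> bool" where
  "aligned n \<pi> i j \<longleftrightarrow> i \<noteq> j \<and> \<pi> j \<noteq> j \<and>
     cw_order n (if \<pi> i = i then [i, \<pi> j, j] else [i, \<pi> i, \<pi> j, j])"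

definition al :: "nat \<Rightarrow> (nat \<Rightarrow> nat) \<Rightarrow> nat" where
  "al n \<pi> = card {{i, j} | i j. i \<in> {1..n} \<and> j \<in> {1..n} \<and> aligned n \<pi> i j}"

definition wex :: "nat \<Rightarrow> (nat \<Rightarrow> nat) \<Rightarrow> nat" where
  "wex n \<pi> = card {i \<in> {1..n}. \<pi> i \<ge> i}"

definition E_poly :: "nat \<Rightarrow> nat \<Rightarrow> real \<Rightarrow> real" where
  "E_poly k n q = (\<Sum>\<pi> \<in> {\<pi>. \<pi> permutes {1..n} \<and> wex n \<pi> = k}.
        q powi (int (k * (n - k)) - int (al n \<pi>)))"

definition E_hat :: "nat \<Rightarrow> nat \<Rightarrow> real \<Rightarrow> real" where
  "E_hat k n q = q powi (int k - int n) * E_poly k n q"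

end

theory Submission
  imports Defs
begin

definition al4 :: "nat \<Rightarrow> nat \<Rightarrow> nat \<Rightarrow> nat \<Rightarrow> nat \<Rightarrow> bool" where
  "al4 n a b c d \<longleftrightarrow> a \<noteq> c \<and> d \<noteq> c \<and> cw_order n (if b = a then [a, d, c] else [a, b, d, c])"

lemma aligned_al4: "aligned n \<pi> i j = al4 n i (\<pi> i) j (\<pi> j)"
  unfolding aligned_def al4_def by auto

lemma mod_sub:
  assumes "1 \<le> p" "p \<le> n" "1 \<le> q" "q \<le> n"
  shows "(int p - int q) mod int n = (if q \<le> p then int p - int q else int p - int q + int n)"
proof (cases "q \<le> p")
  case True
  then show ?thesis using assms by (simp add: mod_pos_pos_trivial)
next
  case False
  have "(int p - int q) mod int n = (int p - int q + int n) mod int n" by simp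
  also have "\<dots> = int p - int q + int n" using assms False by (intro mod_pos_pos_trivial) auto
  finally show ?thesis using False by simp
qed

lemma pair_lemma:
  assumes "a \<in> {1..n}" "b \<in> {1..n}" "c \<in> {1..n}" "d \<in> {1..n}" "a < c" "b \<noteq> d"
  shows "(al4 n a b c d \<or> al4 n c d a b) \<longleftrightarrow> ((b > d) \<noteq> ((a \<le> b) \<noteq> (c \<le> d)))"
  using assms
  unfolding al4_def cw_order_def
  by (auto simp: mod_sub)

definition Prs :: "nat set \<Rightarrow> (nat \<times> nat) set" where
  "Prs S = {(i,j). i \<in> S \<and> j \<in> S \<and> i < j}"

lemma finite_Prs: "finite S \<Longrightarrow> finite (Prs S)"
  unfolding Prs_def by (rule finite_subset[of _ "S \<times> S"]) auto

lemma al_pairs: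
  "al n \<pi> = card {(i,j) \<in> Prs {1..n}. aligned n \<pi> i j \<or> aligned n \<pi> j i}"
proof -
  let ?A = "{(i,j) \<in> Prs {1..n}. aligned n \<pi> i j \<or> aligned n \<pi> j i}"
  have eq: "{{i, j} | i j. i \<in> {1..n} \<and> j \<in> {1..n} \<and> aligned n \<pi> i j} = (\<lambda>(i,j). {i,j}) ` ?A"
  proof (rule set_eqI, rule iffI)
    fix x assume "x \<in> {{i, j} | i j. i \<in> {1..n} \<and> j \<in> {1..n} \<and> aligned n \<pi> i j}"
    then obtain i j where x: "x = {i,j}" "i \<in> {1..n}" "j \<in> {1..n}" "aligned n \<pi> i j" by blast
    then have "i \<noteq> j" unfolding aligned_def by auto
    show "x \<in> (\<lambda>(i,j). {i,j}) ` ?A"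
    proof (cases "i < j")
      case True
      then show ?thesis using x unfolding Prs_def by (auto intro!: image_eqI[of _ _ "(i,j)"])
    next
      case False
      then have "j < i" using \<open>i \<noteq> j\<close> by auto
      then show ?thesis using x unfolding Prs_def by (auto intro!: image_eqI[of _ _ "(j,i)"])
    qed
  next
    fix x assume "x \<in> (\<lambda>(i,j). {i,j}) ` ?A"
    then obtain i j where x: "x = {i,j}" "(i,j) \<in> ?A" by auto
    then show "x \<in> {{i, j} | i j. i \<in> {1..n} \<and> j \<in> {1..n} \<and> aligned n \<pi> i j}"
      unfolding Prs_def by (auto simp: insert_commute)
  qed
  have inj: "inj_on (\<lambda>(i,j). {i,j}) ?A"
  proof (rule inj_onI)
    fix x y assume "x \<in> ?A" "y \<in> ?A" "(\<lambda>(i,j). {i::nat,j}) x = (\<lambda>(i,j). {i,j}) y"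
    then show "x = y" unfolding Prs_def by (auto simp: doubleton_eq_iff)
  qed
  show ?thesis unfolding al_def eq using card_image[OF inj] by simp
qed

definition invs :: "nat set \<Rightarrow> (nat \<Rightarrow> nat) \<Rightarrow> nat" where
  "invs S f = card {(i,j) \<in> Prs S. f j < f i}"

lemma card_one:
  assumes fin: "finite S"
  shows "card {(i,j) \<in> Prs S. (i \<le> f i) \<noteq> (j \<le> f j)} = card {i\<in>S. i \<le> f i} * (card S - card {i\<in>S. i \<le> f i})"
proof -
  let ?O = "{(i,j) \<in> Prs S. (i \<le> f i) \<noteq> (j \<le> f j)}"
  let ?W = "{i\<in>S. i \<le> f i}"
  let ?g = "\<lambda>(i,j). if i \<le> f i then (i,j) else (j,i)"
  have inj: "inj_on ?g ?O"
    by (rule inj_onI) (auto simp: Prs_def split: if_splits)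
  have img: "?g ` ?O = ?W \<times> (S - ?W)"
  proof (rule set_eqI, rule iffI)
    fix x assume "x \<in> ?g ` ?O" then show "x \<in> ?W \<times> (S - ?W)"
      by (auto simp: Prs_def split: if_splits)
  next
    fix x assume x: "x \<in> ?W \<times> (S - ?W)"
    then obtain a b where ab: "x = (a,b)" "a \<in> ?W" "b \<in> S - ?W" by auto
    then have "a \<noteq> b" by auto
    show "x \<in> ?g ` ?O"
    proof (cases "a < b")
      case True then show ?thesis using ab by (auto simp: Prs_def intro!: image_eqI[of _ _ "(a,b)"])
    next
      case False then have "b < a" using \<open>a \<noteq> b\<close> by auto
      then show ?thesis using ab by (auto simp: Prs_def intro!: image_eqI[of _ _ "(b,a)"])
    qed
  qed
  have "card ?O = card (?W \<times> (S - ?W))" using card_image[OF inj] img by simp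
  also have "\<dots> = card ?W * card (S - ?W)" by (simp add: card_cartesian_product)
  also have "card (S - ?W) = card S - card ?W" using fin by (intro card_Diff_subset) auto
  finally show ?thesis .
qed

lemma card_symdiff_parity:
  assumes "finite A" "finite B" "C = (A - B) \<union> (B - A)"
  shows "(-1::int) ^ card C = (-1) ^ card A * (-1) ^ card B"
proof -
  have "card C = card (A - B) + card (B - A)" unfolding assms(3) using assms(1,2) by (intro card_Un_disjoint) auto
  moreover have "card A = card (A - B) + card (A \<inter> B)" using assms
    by (metis Diff_Diff_Int Diff_disjoint Int_lower1 Un_Diff_Int card_Un_disjoint finite_Diff finite_Int)
  moreover have "card B = card (B - A) + card (A \<inter> B)" using assms
    by (metis Diff_Diff_Int Diff_disjoint Int_lower2 Un_Diff_Int card_Un_disjoint finite_Diff finite_Int inf_commute)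
  ultimately show ?thesis by (simp add: power_add algebra_simps)
qed

lemma al_parity:
  assumes p: "\<pi> permutes {1..n}"
  shows "(-1::int) ^ al n \<pi> = (-1) ^ invs {1..n} \<pi> * (-1) ^ (wex n \<pi> * (n - wex n \<pi>))"
proof -
  let ?P = "Prs {1..n}"
  let ?I = "{(i,j) \<in> ?P. \<pi> j < \<pi> i}"
  let ?O = "{(i,j) \<in> ?P. (i \<le> \<pi> i) \<noteq> (j \<le> \<pi> j)}"
  let ?A = "{(i,j) \<in> ?P. aligned n \<pi> i j \<or> aligned n \<pi> j i}"
  have inS: "\<And>i. i \<in> {1..n} \<Longrightarrow> \<pi> i \<in> {1..n}" using p by (metis permutes_in_image)
  have A: "?A = (?I - ?O) \<union> (?O - ?I)"
  proof (rule set_eqI)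
    fix x :: "nat \<times> nat"
    obtain i j where x: "x = (i,j)" by fastforce
    show "x \<in> ?A \<longleftrightarrow> x \<in> (?I - ?O) \<union> (?O - ?I)"
    proof (cases "x \<in> ?P")
      case False then show ?thesis by auto
    next
      case True
      then have ij: "i \<in> {1..n}" "j \<in> {1..n}" "i < j" using x by (auto simp: Prs_def)
      then have "\<pi> i \<noteq> \<pi> j" using p by (metis less_irrefl permutes_inj injD)
      then have "(al4 n i (\<pi> i) j (\<pi> j) \<or> al4 n j (\<pi> j) i (\<pi> i)) \<longleftrightarrow> ((\<pi> i > \<pi> j) \<noteq> ((i \<le> \<pi> i) \<noteq> (j \<le> \<pi> j)))"
        using pair_lemma[of i n "\<pi> i" j "\<pi> j"] ij inS by auto
      then show ?thesis using True x by (auto simp: aligned_al4)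
    qed
  qed
  have fin: "finite ?P" by (simp add: finite_Prs)
  have "(-1::int) ^ al n \<pi> = (-1) ^ card ?A" by (simp add: al_pairs)
  also have "\<dots> = (-1) ^ card ?I * (-1) ^ card ?O"
    by (rule card_symdiff_parity[OF _ _ A]) (use fin in \<open>auto intro: finite_subset[OF _ fin]\<close>)
  also have "card ?O = wex n \<pi> * (n - wex n \<pi>)"
    unfolding wex_def using card_one[of "{1..n}" \<pi>] by simp
  finally show ?thesis by (simp add: invs_def)
qed

definition sgnI :: "nat \<Rightarrow> nat \<Rightarrow> int" where
  "sgnI x y = (if y < x then -1 else 1)"

definition eps :: "nat set \<Rightarrow> (nat \<Rightarrow> nat) \<Rightarrow> int" where
  "eps S f = (\<Prod>(i,j)\<in>Prs S. sgnI (f i) (f j))"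

lemma eps_invs:
  assumes "finite S" shows "eps S f = (-1) ^ invs S f"
proof -
  have "eps S f = (\<Prod>x\<in>Prs S. if f (snd x) < f (fst x) then -1 else 1)"
    unfolding eps_def sgnI_def by (intro prod.cong) auto
  also have "\<dots> = (\<Prod>x\<in>Prs S \<inter> {x. f (snd x) < f (fst x)}. -1) * (\<Prod>x\<in>Prs S \<inter> - {x. f (snd x) < f (fst x)}. 1)"
    by (rule prod.If_cases) (simp add: finite_Prs assms)
  also have "\<dots> = (-1) ^ card (Prs S \<inter> {x. f (snd x) < f (fst x)})" by simp
  also have "Prs S \<inter> {x. f (snd x) < f (fst x)} = {(i,j) \<in> Prs S. f j < f i}" by auto
  finally show ?thesis by (simp add: invs_def)
qed

lemma eps_mult:
  assumes fin: "finite S" and p: "p permutes S" and t: "t permutes S"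
  shows "eps S (t \<circ> p) = eps S t * eps S p"
proof -
  define h where "h u v = (if (u < v) = (t u < t v) then 1 else (-1::int))" for u v
  have hsym: "h u v = h v u" if "u \<noteq> v" for u v
  proof -
    have "t u \<noteq> t v" using that permutes_inj[OF t] by (simp add: inj_eq)
    then show ?thesis using that unfolding h_def by auto
  qed
  have injp: "inj p" using p by (rule permutes_inj)
  have injt: "inj t" using t by (rule permutes_inj)
  have step1: "sgnI (t (p i)) (t (p j)) = sgnI (p i) (p j) * h (p i) (p j)" if "(i,j) \<in> Prs S" for i j
  proof -
    from that have "i \<noteq> j" by (auto simp: Prs_def)
    then have "p i \<noteq> p j" using injp by (auto simp: inj_eq)
    then have "t (p i) \<noteq> t (p j)" using injt by (auto simp: inj_eq)
    then show ?thesis using \<open>p i \<noteq> p j\<close> unfolding sgnI_def h_def by auto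
  qed
  have "eps S (t \<circ> p) = (\<Prod>(i,j)\<in>Prs S. sgnI (p i) (p j) * h (p i) (p j))"
    unfolding eps_def by (intro prod.cong) (auto simp: step1)
  also have "\<dots> = eps S p * (\<Prod>(i,j)\<in>Prs S. h (p i) (p j))"
    unfolding eps_def by (simp add: prod.distrib case_prod_unfold)
  also have "(\<Prod>(i,j)\<in>Prs S. h (p i) (p j)) = (\<Prod>(u,v)\<in>Prs S. h u v)"
  proof -
    define phi where "phi = (\<lambda>(i,j). (min (p i) (p j), max (p i) (p j)))"
    have inS: "p x \<in> S \<longleftrightarrow> x \<in> S" for x using p by (simp add: permutes_in_image)
    have injphi: "inj_on phi (Prs S)"
    proof (rule inj_onI)
      fix x y assume xy: "x \<in> Prs S" "y \<in> Prs S" "phi x = phi y"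
      obtain a b c d where x: "x = (a,b)" and y: "y = (c,d)" by fastforce
      have "a < b" "c < d" using xy x y by (auto simp: Prs_def)
      have "{p a, p b} = {p c, p d}" using xy(3) unfolding x y phi_def
        by (auto simp: min_def max_def split: if_splits)
      then have "{a,b} = {c,d}" using injp
        by (auto simp: doubleton_eq_iff simp: inj_eq)
      then show "x = y" using \<open>a < b\<close> \<open>c < d\<close> x y by (auto simp: doubleton_eq_iff)
    qed
    have sub: "phi ` Prs S \<subseteq> Prs S"
    proof
      fix y assume "y \<in> phi ` Prs S"
      then obtain a b where ab: "(a,b) \<in> Prs S" "y = phi (a,b)" by auto
      then have "a \<noteq> b" "a \<in> S" "b \<in> S" by (auto simp: Prs_def)
      then have "p a \<noteq> p b" "p a \<in> S" "p b \<in> S" using injp inS by (auto simp: inj_eq)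
      then show "y \<in> Prs S" using ab by (auto simp: Prs_def phi_def min_def max_def)
    qed
    have eqimg: "phi ` Prs S = Prs S"
      using sub card_image[OF injphi] by (intro card_subset_eq) (auto simp: finite_Prs fin)
    have bij: "bij_betw phi (Prs S) (Prs S)" using injphi eqimg by (simp add: bij_betw_def)
    have "(\<Prod>(u,v)\<in>Prs S. h u v) = (\<Prod>x\<in>Prs S. (\<lambda>(u,v). h u v) (phi x))"
      by (rule prod.reindex_bij_betw[OF bij, symmetric])
    also have "\<dots> = (\<Prod>(i,j)\<in>Prs S. h (p i) (p j))"
    proof (intro prod.cong refl)
      fix x assume "x \<in> Prs S"
      then obtain a b where x: "x = (a,b)" "a < b" by (auto simp: Prs_def)
      then have "p a \<noteq> p b" using injp by (auto simp: inj_eq)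
      then show "(\<lambda>(u,v). h u v) (phi x) = (\<lambda>(i,j). h (p i) (p j)) x"
        using hsym[of "p a" "p b"] unfolding x phi_def by (auto simp: min_def max_def)
    qed
    finally show ?thesis by simp
  qed
  also have "(\<Prod>(u,v)\<in>Prs S. h u v) = eps S t"
    unfolding eps_def
  proof (intro prod.cong refl)
    fix x assume "x \<in> Prs S"
    then obtain a b where x: "x = (a,b)" "a < b" by (auto simp: Prs_def)
    then have "t a \<noteq> t b" using injt by (auto simp: inj_eq)
    then show "(\<lambda>(u,v). h u v) x = (\<lambda>(i,j). sgnI (t i) (t j)) x"
      unfolding x h_def sgnI_def using x by auto
  qed
  finally have "eps S (t \<circ> p) = eps S p * eps S t" .
  then show ?thesis by (simp add: mult.commute)
qed

lemma tr_aux: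
  fixes a b i j :: nat
  assumes "a < b"
  shows "(i<j \<and> (if j=a then b else if j=b then a else j) < (if i=a then b else if i=b then a else i))
     \<longleftrightarrow> ((i = a \<and> (j = b \<or> (a<j \<and> j<b))) \<or> (j = b \<and> a<i \<and> i<b))"
  using assms by (simp split: if_split) linarith

lemma invs_transpose:
  assumes fin: "finite S" and ab: "a \<in> S" "b \<in> S" "a < b"
  shows "odd (invs S (Transposition.transpose a b))"
proof -
  let ?t = "Transposition.transpose a b"
  let ?X = "{v\<in>S. a < v \<and> v < b}"
  have eq: "{(i,j) \<in> Prs S. ?t j < ?t i} = ((\<lambda>v. (a,v)) ` insert b ?X) \<union> ((\<lambda>u. (u,b)) ` ?X)"
  proof (rule set_eqI)
    fix x :: "nat \<times> nat"
    obtain i j where x: "x = (i,j)" by fastforce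
    have l: "x \<in> {(i,j) \<in> Prs S. ?t j < ?t i} \<longleftrightarrow> i\<in>S \<and> j\<in>S \<and> i<j \<and> ?t j < ?t i"
      by (simp add: x Prs_def)
    have r: "x \<in> ((\<lambda>v. (a,v)) ` insert b ?X) \<union> ((\<lambda>u. (u,b)) ` ?X) \<longleftrightarrow>
       (i = a \<and> (j = b \<or> (j\<in>S \<and> a<j \<and> j<b))) \<or> (j = b \<and> i\<in>S \<and> a<i \<and> i<b)"
      unfolding x by blast
    have t: "?t y = (if y = a then b else if y = b then a else y)" for y
      by (simp add: transpose_def)
    show "x \<in> {(i,j) \<in> Prs S. ?t j < ?t i} \<longleftrightarrow> x \<in> ((\<lambda>v. (a,v)) ` insert b ?X) \<union> ((\<lambda>u. (u,b)) ` ?X)"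
      unfolding l r unfolding t using ab tr_aux[of a b i j] by blast
  qed
  have finX: "finite ?X" using fin by auto
  have disj: "((\<lambda>v. (a,v)) ` insert b ?X) \<inter> ((\<lambda>u. (u,b)) ` ?X) = {}" using ab by auto
  have "invs S ?t = card ((\<lambda>v. (a,v)) ` insert b ?X) + card ((\<lambda>u. (u,b)) ` ?X)"
    unfolding invs_def eq using finX disj by (intro card_Un_disjoint) auto
  also have "\<dots> = card (insert b ?X) + card ?X"
    by (subst card_image, simp add: inj_on_def)+ simp
  also have "\<dots> = 2 * card ?X + 1" using finX by simp
  finally show ?thesis by simp
qed

lemma sign_invs:
  assumes fin: "finite S" and p: "p permutes S"
  shows "sign p = (-1) ^ invs S p"
  using p fin
proof (induction rule: permutes_induct)
  case id
  have "invs S id = card ({}::(nat\<times>nat) set)" unfolding invs_def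
    by (rule arg_cong[where f=card]) (auto simp: Prs_def)
  then have "invs S id = 0" by simp
  then show ?case by (metis power_0 sign_id)
next
  case (swap a b p)
  have tS: "Transposition.transpose a b permutes S" using swap.hyps by (simp add: permutes_swap_id)
  have "eps S (Transposition.transpose a b) = -1"
  proof (cases "a < b")
    case True then show ?thesis using invs_transpose[OF fin swap.hyps(1,2)] by (simp add: eps_invs fin)
  next
    case False then have "b < a" using swap.hyps(3) by auto
    then show ?thesis using invs_transpose[OF fin swap.hyps(2,1)] by (simp add: eps_invs fin transpose_commute)
  qed
  moreover have "sign (Transposition.transpose a b \<circ> p) = - sign p"
    using swap.hyps permutes_imp_permutation[OF fin] tS
    by (simp add: sign_compose sign_swap_id permutes_imp_permutation[OF fin])
  ultimately have "sign (Transposition.transpose a b \<circ> p) = eps S (Transposition.transpose a b \<circ> p)"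
    using eps_mult[OF fin swap.hyps(4) tS] swap.IH by (simp add: eps_invs[OF fin])
  then show ?case by (simp only: eps_invs[OF fin])
qed

definition Pn :: "nat \<Rightarrow> (nat \<Rightarrow> nat) set" where
  "Pn n = {p. p permutes {1..n}}"

definition acoef :: "nat \<Rightarrow> nat \<Rightarrow> int" where
  "acoef n k = (\<Sum>p\<in>Pn n. if wex n p = k then sign p else 0)"

lemma wex_le: "wex n p \<le> n"
proof -
  have "card {i\<in>{1..n}. i \<le> p i} \<le> card {1..n}" by (rule card_mono) auto
  then show ?thesis unfolding wex_def by simp
qed

lemma wex_Suc_fix:
  assumes q: "q permutes {1..n}"
  shows "wex (Suc n) q = Suc (wex n q)"
proof -
  have qn: "q (Suc n) = Suc n" using q by (intro permutes_not_in) auto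
  have "{i \<in> {1..Suc n}. i \<le> q i} = insert (Suc n) {i \<in> {1..n}. i \<le> q i}"
    using qn by (auto simp: le_Suc_eq)
  then show ?thesis unfolding wex_def by simp
qed

lemma wex_Suc_swap:
  assumes q: "q permutes {1..n}" and c: "c \<in> {1..n}"
  shows "wex (Suc n) (Transposition.transpose (Suc n) (q c) \<circ> q) = wex n q + (if q c < c then 1 else 0)"
proof -
  let ?t = "Transposition.transpose (Suc n) (q c)"
  have qn: "q (Suc n) = Suc n" using q by (intro permutes_not_in) auto
  have qS: "\<And>i. i \<in> {1..n} \<Longrightarrow> q i \<in> {1..n}" using q by (metis permutes_in_image)
  have qcS: "q c \<in> {1..n}" using qS c by blast
  have injq: "inj q" using q by (rule permutes_inj)
  have val: "(?t \<circ> q) i = (if i = c then Suc n else q i)" if "i \<in> {1..n}" for i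
  proof -
    have "q i \<in> {1..n}" using qS that by blast
    then have "q i \<noteq> Suc n" by auto
    moreover have "q i = q c \<longleftrightarrow> i = c" using injq by (simp add: inj_eq)
    ultimately show ?thesis by (auto simp: transpose_def)
  qed
  have valn: "(?t \<circ> q) (Suc n) = q c" using qn by (simp add: transpose_def)
  have set: "{i \<in> {1..Suc n}. i \<le> (?t \<circ> q) i} = insert c {i \<in> {1..n}. i \<le> q i}"
  proof (rule set_eqI)
    fix i
    show "i \<in> {i \<in> {1..Suc n}. i \<le> (?t \<circ> q) i} \<longleftrightarrow> i \<in> insert c {i \<in> {1..n}. i \<le> q i}"
    proof (cases "i = Suc n")
      case True then show ?thesis using valn qcS c by auto
    next
      case False
      show ?thesis
      proof (cases "i \<in> {1..n}")
        case True then show ?thesis using val[OF True] c by auto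
      next
        case F2: False then show ?thesis using False c by auto
      qed
    qed
  qed
  show ?thesis
  proof (cases "q c < c")
    case True
    then have "c \<notin> {i \<in> {1..n}. i \<le> q i}" by auto
    then show ?thesis unfolding wex_def set using True by simp
  next
    case False
    then have "insert c {i \<in> {1..n}. i \<le> q i} = {i \<in> {1..n}. i \<le> q i}" using c by auto
    then show ?thesis unfolding wex_def set using False by simp
  qed
qed

lemma card_lt: 
  assumes q: "q permutes {1..n}"
  shows "card {c \<in> {1..n}. q c < c} = n - wex n q"
proof -
  have "{c \<in> {1..n}. q c < c} = {1..n} - {i \<in> {1..n}. i \<le> q i}" by auto
  moreover have "card ({1..n} - {i \<in> {1..n}. i \<le> q i}) = card {1..n} - card {i \<in> {1..n}. i \<le> q i}"
    by (rule card_Diff_subset) auto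
  ultimately have "card {c \<in> {1..n}. q c < c} = card {1..n} - card {i \<in> {1..n}. i \<le> q i}"
    by simp
  then show ?thesis unfolding wex_def by simp
qed

lemma inner_sum:
  assumes q: "q permutes {1..n}"
  shows "(\<Sum>c\<in>{1..n}. (if wex n q + (if q c < c then 1 else 0) = k then 1 else 0) :: int)
    = int (n - wex n q) * (if wex n q + 1 = k then 1 else 0) + int (wex n q) * (if wex n q = k then 1 else 0)"
proof -
  have "(\<Sum>c\<in>{1..n}. (if wex n q + (if q c < c then 1 else 0) = k then 1 else 0) :: int)
     = (\<Sum>c\<in>{1..n}. if q c < c then (if wex n q + 1 = k then 1 else 0) else (if wex n q = k then 1 else 0))"
    by (intro sum.cong) auto
  also have "\<dots> = (\<Sum>c\<in>{1..n} \<inter> {c. q c < c}. (if wex n q + 1 = k then 1 else 0)) +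
                   (\<Sum>c\<in>{1..n} \<inter> - {c. q c < c}. (if wex n q = k then 1 else 0))"
    by (rule sum.If_cases) simp
  also have "{1..n} \<inter> {c. q c < c} = {c \<in> {1..n}. q c < c}" by auto
  also have "{1..n} \<inter> - {c. q c < c} = {i \<in> {1..n}. i \<le> q i}" by auto
  finally show ?thesis using card_lt[OF q] unfolding wex_def by simp
qed

lemma acoef_rec:
  "acoef (Suc n) k = (\<Sum>q\<in>Pn n. sign q * ((if wex n q + 1 = k then 1 else 0)
      - (int (n - wex n q) * (if wex n q + 1 = k then 1 else 0) + int (wex n q) * (if wex n q = k then 1 else 0))))"
proof -
  define f where "f p = (if wex (Suc n) p = k then sign p else (0::int))" for p
  have ins: "{1..Suc n} = insert (Suc n) {1..n}" by auto
  have "acoef (Suc n) k = (\<Sum>b\<in>insert (Suc n) {1..n}. \<Sum>q\<in>Pn n. f (Transposition.transpose (Suc n) b \<circ> q))"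
    unfolding acoef_def Pn_def f_def ins by (rule sum_over_permutations_insert) auto
  also have "\<dots> = (\<Sum>q\<in>Pn n. f (Transposition.transpose (Suc n) (Suc n) \<circ> q)) + (\<Sum>b\<in>{1..n}. \<Sum>q\<in>Pn n. f (Transposition.transpose (Suc n) b \<circ> q))"
    by (rule sum.insert) auto
  also have "(\<Sum>q\<in>Pn n. f (Transposition.transpose (Suc n) (Suc n) \<circ> q)) = (\<Sum>q\<in>Pn n. sign q * (if wex n q + 1 = k then 1 else 0))"
    by (intro sum.cong refl) (auto simp: f_def Pn_def wex_Suc_fix)
  also have "(\<Sum>b\<in>{1..n}. \<Sum>q\<in>Pn n. f (Transposition.transpose (Suc n) b \<circ> q))
      = (\<Sum>q\<in>Pn n. \<Sum>b\<in>{1..n}. f (Transposition.transpose (Suc n) b \<circ> q))"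
    by (rule sum.swap)
  also have "\<dots> = (\<Sum>q\<in>Pn n. - sign q * (int (n - wex n q) * (if wex n q + 1 = k then 1 else 0) + int (wex n q) * (if wex n q = k then 1 else 0)))"
  proof (intro sum.cong refl)
    fix q assume "q \<in> Pn n"
    then have q: "q permutes {1..n}" by (simp add: Pn_def)
    have bij: "bij_betw q {1..n} {1..n}" using q by (rule permutes_imp_bij)
    have "(\<Sum>b\<in>{1..n}. f (Transposition.transpose (Suc n) b \<circ> q)) = (\<Sum>c\<in>{1..n}. f (Transposition.transpose (Suc n) (q c) \<circ> q))"
      by (rule sum.reindex_bij_betw[OF bij, symmetric])
    also have "\<dots> = (\<Sum>c\<in>{1..n}. - sign q * (if wex n q + (if q c < c then 1 else 0) = k then 1 else 0))"
    proof (intro sum.cong refl)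
      fix c assume c: "c \<in> {1..n}"
      have qcS: "q c \<in> {1..n}" using q c by (metis permutes_in_image)
      then have ne: "q c \<noteq> Suc n" by auto
      have tS: "Transposition.transpose (Suc n) (q c) permutes {1..Suc n}"
        using qcS by (intro permutes_swap_id) auto
      have qS: "q permutes {1..Suc n}" using q by (rule permutes_subset) auto
      have "sign (Transposition.transpose (Suc n) (q c) \<circ> q) = - sign q"
        using ne by (simp add: sign_compose sign_swap_id permutes_imp_permutation[OF _ tS] permutes_imp_permutation[OF _ qS])
      then show "f (Transposition.transpose (Suc n) (q c) \<circ> q) = - sign q * (if wex n q + (if q c < c then 1 else 0) = k then 1 else 0)"
        unfolding f_def using wex_Suc_swap[OF q c] by simp
    qed
    also have "\<dots> = - sign q * (\<Sum>c\<in>{1..n}. (if wex n q + (if q c < c then 1 else 0) = k then 1 else 0))"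
      by (simp add: sum_distrib_left)
    also have "\<dots> = - sign q * (int (n - wex n q) * (if wex n q + 1 = k then 1 else 0) + int (wex n q) * (if wex n q = k then 1 else 0))"
      by (simp only: inner_sum[OF q])
    finally show "(\<Sum>b\<in>{1..n}. f (Transposition.transpose (Suc n) b \<circ> q)) = \<dots>" .
  qed
  finally show ?thesis by (simp add: sum.distrib[symmetric] algebra_simps sum_subtractf[symmetric])
qed

definition Acl :: "nat \<Rightarrow> nat \<Rightarrow> int" where
  "Acl n k = (if k = 0 then 0 else (-1) ^ (n - k) * int ((n - 1) choose (k - 1)))"

lemma acoef_scale:
  "(\<Sum>q\<in>Pn n. sign q * (if wex n q = j then c else 0)) = c * acoef n j"
  unfolding acoef_def sum_distrib_left by (intro sum.cong refl) auto

lemma acoef_step0: "acoef (Suc n) 0 = 0"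
  unfolding acoef_rec by (intro sum.neutral) auto

lemma acoef_step:
  "acoef (Suc n) (Suc j) = (1 - int (n - j)) * acoef n j - int (Suc j) * acoef n (Suc j)"
proof -
  have "acoef (Suc n) (Suc j) = (\<Sum>q\<in>Pn n. sign q * (if wex n q = j then 1 - int (n - j) else 0)
      - sign q * (if wex n q = Suc j then int (Suc j) else 0))"
    unfolding acoef_rec by (intro sum.cong refl) (auto simp: algebra_simps)
  also have "\<dots> = (1 - int (n - j)) * acoef n j - int (Suc j) * acoef n (Suc j)"
    by (simp add: sum_subtractf acoef_scale)
  finally show ?thesis .
qed

lemma Pn0: "Pn 0 = {id}"
  unfolding Pn_def by auto

lemma acoef_one: "acoef (Suc 0) k = (if k = 1 then 1 else 0)"
proof -
  have "wex 0 id = 0" unfolding wex_def by simp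
  then show ?thesis unfolding acoef_rec Pn0 by simp
qed

lemma Acl_step:
  assumes "n \<ge> 1"
  shows "Acl (Suc n) (Suc j) = (1 - int (n - j)) * Acl n j - int (Suc j) * Acl n (Suc j)"
proof -
  obtain m where n: "n = Suc m" using assms by (cases n) auto
  show ?thesis
  proof (cases j)
    case 0
    then show ?thesis unfolding n Acl_def by simp
  next
    case (Suc i)
    have lhs: "Acl (Suc n) (Suc j) = (-1) ^ (m - i) * int (Suc m choose Suc i)"
      unfolding Acl_def n Suc by simp
    have a1: "Acl n j = (-1) ^ (m - i) * int (m choose i)" unfolding Acl_def n Suc by simp
    have a2: "Acl n (Suc j) = (-1) ^ (m - Suc i) * int (m choose Suc i)" unfolding Acl_def n Suc by simp
    consider "i < m" | "i = m" | "m < i" by arith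
    then show ?thesis
    proof cases
      case 1
      have "m - i = Suc (m - Suc i)" using 1 by arith
      then have e: "(-1::int) ^ (m - i) = - ((-1) ^ (m - Suc i))" by simp
      have bin: "Suc i * (m choose Suc i) = (m - i) * (m choose i)"
        using binomial_absorption[of i m] binomial_absorb_comp[of m i] by simp
      have bin': "int (Suc i) * int (m choose Suc i) = int (m - i) * int (m choose i)"
        using arg_cong[OF bin, of int] by (simp only: of_nat_mult)
      have pas: "int (Suc m choose Suc i) = int (m choose i) + int (m choose Suc i)" by simp
      have nj: "int (n - j) = int (m - i)" unfolding n Suc by simp
      have "Acl (Suc n) (Suc j) = - ((-1) ^ (m - Suc i)) * (int (m choose i) + int (m choose Suc i))"
        unfolding lhs e pas ..
      also have "\<dots> = (1 - int (m - i)) * (- ((-1) ^ (m - Suc i)) * int (m choose i))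
           - int (Suc j) * ((-1) ^ (m - Suc i) * int (m choose Suc i))"
        using arg_cong[OF bin', of "\<lambda>z. z * (-1) ^ (m - Suc i)"] unfolding Suc by (simp add: algebra_simps)
      also have "\<dots> = (1 - int (n - j)) * Acl n j - int (Suc j) * Acl n (Suc j)"
        unfolding a1 a2 e nj ..
      finally show ?thesis .
    next
      case 2
      then show ?thesis unfolding n Suc Acl_def by simp
    next
      case 3
      then show ?thesis unfolding n Suc Acl_def by (simp add: binomial_eq_0)
    qed
  qed
qed

lemma acoef_closed: "n \<ge> 1 \<Longrightarrow> acoef n k = Acl n k"
proof (induction n arbitrary: k rule: dec_induct)
  case base
  have "acoef 1 k = (if k = 1 then 1 else 0)" using acoef_one by simp
  then show ?case unfolding Acl_def by (cases k) auto
next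
  case (step n)
  show ?case
  proof (cases k)
    case 0 then show ?thesis by (simp add: acoef_step0 Acl_def)
  next
    case (Suc j)
    then show ?thesis using step by (simp add: acoef_step Acl_step)
  qed
qed

lemma pw: "(-1::real) powi (int a - int b) = (-1) ^ (a + b)"
proof (cases "even (a + b)")
  case True
  then have "even (int a - int b)" by (simp add: even_diff)
  then show ?thesis using True by simp
next
  case False
  then have "odd (int a - int b)" by (simp add: even_diff)
  then show ?thesis using False by simp
qed

theorem mainTheorem12:
  fixes k n :: nat
  assumes "1 \<le> k" and "k \<le> n"
  shows "E_hat k n (-1) = real ((n - 1) choose (k - 1)) \<or>
         E_hat k n (-1) = - real ((n - 1) choose (k - 1))"
proof -
  let ?A = "{\<pi>. \<pi> permutes {1..n} \<and> wex n \<pi> = k}"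
  have termeq: "(-1::real) powi (int (k * (n - k)) - int (al n \<pi>)) = of_int (sign \<pi>)" if "\<pi> \<in> ?A" for \<pi>
  proof -
    have p: "\<pi> permutes {1..n}" and w: "wex n \<pi> = k" using that by auto
    have "(-1::int) ^ (k * (n - k) + al n \<pi>) = (-1) ^ (k * (n - k)) * (-1) ^ al n \<pi>"
      by (simp add: power_add)
    also have "\<dots> = (-1) ^ invs {1..n} \<pi> * ((-1) ^ (k * (n - k)) * (-1) ^ (k * (n - k)))"
      using al_parity[OF p] w by (simp add: algebra_simps)
    also have "(-1::int) ^ (k * (n - k)) * (-1) ^ (k * (n - k)) = 1"
      by (simp add: power_add[symmetric])
    also have "(-1) ^ invs {1..n} \<pi> = sign \<pi>" using sign_invs[OF _ p] by simp
    finally have "(-1::int) ^ (k * (n - k) + al n \<pi>) = sign \<pi>" by simp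
    then have "(-1::real) ^ (k * (n - k) + al n \<pi>) = of_int (sign \<pi>)"
      by (metis of_int_minus of_int_1 of_int_power)
    then show ?thesis by (simp only: pw)
  qed
  have "E_poly k n (-1) = (\<Sum>\<pi>\<in>?A. of_int (sign \<pi>))"
    unfolding E_poly_def by (intro sum.cong refl) (use termeq in auto)
  also have "\<dots> = of_int (\<Sum>\<pi>\<in>?A. sign \<pi>)" by simp
  also have "(\<Sum>\<pi>\<in>?A. sign \<pi>) = acoef n k"
  proof -
    have "?A = {p \<in> Pn n. wex n p = k}" by (auto simp: Pn_def)
    moreover have "finite (Pn n)" unfolding Pn_def by (rule finite_permutations) simp
    ultimately show ?thesis unfolding acoef_def by (simp add: sum.inter_filter)
  qed
  also have "acoef n k = (-1) ^ (n - k) * int ((n - 1) choose (k - 1))"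
    using acoef_closed[of n k] assms unfolding Acl_def by simp
  finally have E: "E_poly k n (-1) = (-1) ^ (n - k) * real ((n - 1) choose (k - 1))" by simp
  have "E_hat k n (-1) = (-1) ^ (k + n) * ((-1) ^ (n - k) * real ((n - 1) choose (k - 1)))"
    unfolding E_hat_def E pw ..
  also have "\<dots> = (-1) ^ (k + n + (n - k)) * real ((n - 1) choose (k - 1))" by (simp add: power_add)
  also have "k + n + (n - k) = 2 * n" using assms by simp
  finally have "E_hat k n (-1) = real ((n - 1) choose (k - 1))"
    by (simp add: power_mult)
  then show ?thesis by simp
qed

end
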